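(* For every positive integer $n$ with $n\ne2,6$, there exist a $(2,3,n)$-AONT and a $(1,3,n)$-AONT.
   Context: Let $X$ be a finite alphabet with $|X|=v$ and $0\le t\le s$. A $(t,s,v)$-AONT is a bijection $\phi:X^s\to X^s$ such that for every $I\subseteq\{1,\dots,s\}$ with $|I|=t$ and every $J\subseteq\{1,\dots,s\}$ with $|J|=s-t$, the map $x\mapsto\big((x_i)_{i\in I},(\phi(x)_j)_{j\in J}\big)$ is a bijection $X^s\to X^t\times X^{s-t}$. *)

theory Defs
  imports "HOL-Library.FuncSet"
begin

text \<open>Words of length s over alphabet X: functions on the index set {0..<s}
  (positions 1..s of the paper shifted to 0..s-1), extensional outside.\<close>
definition words :: "'a set \<Rightarrow> nat \<Rightarrow> (nat \<Rightarrow> 'a) set" where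
  "words X s = PiE {..<s} (\<lambda>_. X)"

definition AONT :: "'a set \<Rightarrow> nat \<Rightarrow> nat \<Rightarrow> nat \<Rightarrow> ((nat \<Rightarrow> 'a) \<Rightarrow> (nat \<Rightarrow> 'a)) \<Rightarrow> bool" where
  "AONT X t s v \<phi> \<longleftrightarrow>
     finite X \<and> card X = v \<and> t \<le> s \<and>
     bij_betw \<phi> (words X s) (words X s) \<and>
     (\<forall>I J. I \<subseteq> {..<s} \<and> card I = t \<and> J \<subseteq> {..<s} \<and> card J = s - t \<longrightarrow>
        bij_betw (\<lambda>x. (restrict x I, restrict (\<phi> x) J))
                 (words X s) (PiE I (\<lambda>_. X) \<times> PiE J (\<lambda>_. X)))"

end

theory Submission
  imports Defs "HOL-Computational_Algebra.Primes"
begin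

definition OA :: "nat \<Rightarrow> nat \<Rightarrow> (nat \<Rightarrow> nat) set \<Rightarrow> bool" where
 "OA k n R \<longleftrightarrow> (\<forall>r\<in>R. \<forall>j. (j < k \<longrightarrow> r j < n) \<and> (k \<le> j \<longrightarrow> r j = 0)) \<and>
   (\<forall>j j'. j<k \<longrightarrow> j'<k \<longrightarrow> j \<noteq> j' \<longrightarrow> (\<forall>a<n. \<forall>b<n. \<exists>r\<in>R. r j = a \<and> r j' = b)) \<and>
   (\<forall>j j'. j<k \<longrightarrow> j'<k \<longrightarrow> j \<noteq> j' \<longrightarrow> (\<forall>r\<in>R. \<forall>r'\<in>R. r j = r' j \<longrightarrow> r j' = r' j' \<longrightarrow> r = r'))"

lemma OA_intro:
  assumes v: "\<And>r j. r\<in>R \<Longrightarrow> j<k \<Longrightarrow> r j < n" and z: "\<And>r j. r\<in>R \<Longrightarrow> k \<le> j \<Longrightarrow> r j = 0"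
   and e: "\<And>j j' a b. j < j' \<Longrightarrow> j' < k \<Longrightarrow> a < n \<Longrightarrow> b < n \<Longrightarrow> \<exists>r\<in>R. r j = a \<and> r j' = b"
   and u: "\<And>j j' r r'. j < j' \<Longrightarrow> j' < k \<Longrightarrow> r\<in>R \<Longrightarrow> r'\<in>R \<Longrightarrow> r j = r' j \<Longrightarrow> r j' = r' j' \<Longrightarrow> r = r'"
  shows "OA k n R"
proof -
  have E: "\<exists>r\<in>R. r j = a \<and> r j' = b" if "j<k" "j'<k" "j\<noteq>j'" "a<n" "b<n" for j j' a b
  proof (cases "j<j'")
    case True then show ?thesis using e that by blast
  next
    case False then have "j' < j" using that by simp
    then show ?thesis using e[of j' j b a] that by blast
  qed
  have U: "r = r'" if "j<k" "j'<k" "j\<noteq>j'" "r\<in>R" "r'\<in>R" "r j = r' j" "r j' = r' j'" for j j' r r'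
  proof (cases "j<j'")
    case True then show ?thesis using u that by blast
  next
    case False then have "j' < j" using that by simp
    then show ?thesis using u[of j' j r r'] that by blast
  qed
  have V: "\<forall>r\<in>R. \<forall>j. (j < k \<longrightarrow> r j < n) \<and> (k \<le> j \<longrightarrow> r j = 0)" using v z by blast
  have E': "\<forall>j j'. j<k \<longrightarrow> j'<k \<longrightarrow> j \<noteq> j' \<longrightarrow> (\<forall>a<n. \<forall>b<n. \<exists>r\<in>R. r j = a \<and> r j' = b)"
    using E by blast
  have U': "\<forall>j j'. j<k \<longrightarrow> j'<k \<longrightarrow> j \<noteq> j' \<longrightarrow> (\<forall>r\<in>R. \<forall>r'\<in>R. r j = r' j \<longrightarrow> r j' = r' j' \<longrightarrow> r = r')"
    using U by blast
  show ?thesis unfolding OA_def using V E' U' by blast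
qed

lemma OA_parts:
  assumes "OA k n R"
  shows "\<forall>r\<in>R. \<forall>j. (j < k \<longrightarrow> r j < n) \<and> (k \<le> j \<longrightarrow> r j = 0)"
    "\<forall>j j'. j<k \<longrightarrow> j'<k \<longrightarrow> j \<noteq> j' \<longrightarrow> (\<forall>a<n. \<forall>b<n. \<exists>r\<in>R. r j = a \<and> r j' = b)"
    "\<forall>j j'. j<k \<longrightarrow> j'<k \<longrightarrow> j \<noteq> j' \<longrightarrow> (\<forall>r\<in>R. \<forall>r'\<in>R. r j = r' j \<longrightarrow> r j' = r' j' \<longrightarrow> r = r')"
  using assms unfolding OA_def by auto

lemma OA_val: "OA k n R \<Longrightarrow> r\<in>R \<Longrightarrow> j<k \<Longrightarrow> r j < n"
  using OA_parts(1) by blast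
lemma OA_zero: "OA k n R \<Longrightarrow> r\<in>R \<Longrightarrow> k \<le> j \<Longrightarrow> r j = 0"
  using OA_parts(1) by blast
lemma OA_ex: "OA k n R \<Longrightarrow> j<k \<Longrightarrow> j'<k \<Longrightarrow> j \<noteq> j' \<Longrightarrow> a<n \<Longrightarrow> b<n \<Longrightarrow> \<exists>r\<in>R. r j = a \<and> r j' = b"
  using OA_parts(2) by blast
lemma OA_uniq: "OA k n R \<Longrightarrow> j<k \<Longrightarrow> j'<k \<Longrightarrow> j \<noteq> j' \<Longrightarrow> r\<in>R \<Longrightarrow> r'\<in>R \<Longrightarrow> r j = r' j \<Longrightarrow> r j' = r' j' \<Longrightarrow> r = r'"
  using OA_parts(3) by blast

definition mrow :: "nat \<Rightarrow> nat \<Rightarrow> nat \<Rightarrow> nat \<Rightarrow> nat \<Rightarrow> nat" where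
 "mrow x y a b = (\<lambda>j. if j = 0 then x else if j = 1 then y else if j = 2 then a else if j = 3 then b else 0)"

lemma surj_lt: "inj_on f {..<(n::nat)} \<Longrightarrow> (\<And>x. x<n \<Longrightarrow> f x < n) \<Longrightarrow> c < n \<Longrightarrow> \<exists>x<n. f x = c"
proof -
  assume a: "inj_on f {..<n}" "\<And>x. x<n \<Longrightarrow> f x < n" "c < n"
  have "f ` {..<n} = {..<n}" by (rule endo_inj_surj) (use a in auto)
  then show ?thesis using a(3) by (metis imageE lessThan_iff)
qed

lemma mols_OA:
  fixes A B :: "nat \<Rightarrow> nat \<Rightarrow> nat"
  assumes vals: "\<And>x y. x<n \<Longrightarrow> y<n \<Longrightarrow> A x y < n \<and> B x y < n"
   and iA1: "\<And>x. x<n \<Longrightarrow> inj_on (A x) {..<n}" and iA2: "\<And>y. y<n \<Longrightarrow> inj_on (\<lambda>x. A x y) {..<n}"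
   and iB1: "\<And>x. x<n \<Longrightarrow> inj_on (B x) {..<n}" and iB2: "\<And>y. y<n \<Longrightarrow> inj_on (\<lambda>x. B x y) {..<n}"
   and iAB: "inj_on (\<lambda>(x,y). (A x y, B x y)) ({..<n}\<times>{..<n})"
  shows "OA 4 n ((\<lambda>(x,y). mrow x y (A x y) (B x y)) ` ({..<n}\<times>{..<n}))" (is "OA 4 n ?R")
proof (rule OA_intro)
  fix r :: "nat \<Rightarrow> nat" and j :: nat assume "r \<in> ?R" "j < 4" then show "r j < n" using vals by (auto simp: mrow_def)
next
  fix r :: "nat \<Rightarrow> nat" and j :: nat assume "r \<in> ?R" "4 \<le> j" then show "r j = 0" by (auto simp: mrow_def)
next
  have mem: "mrow x y (A x y) (B x y) \<in> ?R" if "x<n" "y<n" for x y using that by auto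
  fix j j' a b :: nat assume jj: "j < j'" "j' < 4" and ab: "a < n" "b < n"
  have "j' = 1 \<and> j = 0 \<or> j' = 2 \<and> j = 0 \<or> j' = 3 \<and> j = 0 \<or> j' = 2 \<and> j = 1 \<or> j' = 3 \<and> j = 1 \<or> j' = 3 \<and> j = 2"
    using jj by auto
  then show "\<exists>r\<in>?R. r j = a \<and> r j' = b"
  proof (elim disjE conjE)
    assume "j' = 1" "j = 0" then show ?thesis by (intro bexI[OF _ mem[OF ab]]) (simp add: mrow_def)
  next
    assume "j' = 2" "j = 0"
    obtain y where "y<n" "A a y = b" using surj_lt[OF iA1[OF ab(1)] _ ab(2)] vals ab by blast
    then show ?thesis using \<open>j' = 2\<close> \<open>j = 0\<close> by (intro bexI[OF _ mem[OF ab(1) \<open>y<n\<close>]]) (simp add: mrow_def)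
  next
    assume "j' = 3" "j = 0"
    obtain y where "y<n" "B a y = b" using surj_lt[OF iB1[OF ab(1)] _ ab(2)] vals ab by blast
    then show ?thesis using \<open>j' = 3\<close> \<open>j = 0\<close> by (intro bexI[OF _ mem[OF ab(1) \<open>y<n\<close>]]) (simp add: mrow_def)
  next
    assume "j' = 2" "j = 1"
    obtain x where "x<n" "A x a = b" using surj_lt[OF iA2[OF ab(1)] _ ab(2)] vals ab by blast
    then show ?thesis using \<open>j' = 2\<close> \<open>j = 1\<close> by (intro bexI[OF _ mem[OF \<open>x<n\<close> ab(1)]]) (simp add: mrow_def)
  next
    assume "j' = 3" "j = 1"
    obtain x where "x<n" "B x a = b" using surj_lt[OF iB2[OF ab(1)] _ ab(2)] vals ab by blast
    then show ?thesis using \<open>j' = 3\<close> \<open>j = 1\<close> by (intro bexI[OF _ mem[OF \<open>x<n\<close> ab(1)]]) (simp add: mrow_def)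
  next
    assume "j' = 3" "j = 2"
    let ?S = "{..<n}\<times>{..<n}"
    have "(\<lambda>(x,y). (A x y, B x y)) ` ?S = ?S"
      by (rule endo_inj_surj) (use iAB vals in auto)
    then have "(a,b) \<in> (\<lambda>(x,y). (A x y, B x y)) ` ?S" using ab by simp
    then obtain x y where "x<n" "y<n" "A x y = a" "B x y = b" by auto
    then show ?thesis using \<open>j' = 3\<close> \<open>j = 2\<close> by (intro bexI[OF _ mem[OF \<open>x<n\<close> \<open>y<n\<close>]]) (simp add: mrow_def)
  qed
next
  fix j j' :: nat and r r' :: "nat \<Rightarrow> nat" assume jj: "j < j'" "j' < 4" and rr: "r \<in> ?R" "r' \<in> ?R" and eq: "r j = r' j" "r j' = r' j'"
  obtain x y where xy: "x<n" "y<n" "r = mrow x y (A x y) (B x y)" using rr(1) by auto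
  obtain x' y' where xy': "x'<n" "y'<n" "r' = mrow x' y' (A x' y') (B x' y')" using rr(2) by auto
  have e1: "x = x' \<and> y = y'" if "j = 0" "j' = 1" using eq xy xy' that by (simp add: mrow_def)
  have e2: "x = x' \<and> y = y'" if "j = 0" "j' = 2"
  proof -
    have "x = x'" "A x y = A x' y'" using eq xy xy' that by (simp_all add: mrow_def)
    then show ?thesis using inj_onD[OF iA1[OF xy(1)], of y y'] xy xy' by simp
  qed
  have e3: "x = x' \<and> y = y'" if "j = 0" "j' = 3"
  proof -
    have "x = x'" "B x y = B x' y'" using eq xy xy' that by (simp_all add: mrow_def)
    then show ?thesis using inj_onD[OF iB1[OF xy(1)], of y y'] xy xy' by simp
  qed
  have e4: "x = x' \<and> y = y'" if "j = 1" "j' = 2"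
  proof -
    have "y = y'" "A x y = A x' y'" using eq xy xy' that by (simp_all add: mrow_def)
    then show ?thesis using inj_onD[OF iA2[OF xy(2)], of x x'] xy xy' by simp
  qed
  have e5: "x = x' \<and> y = y'" if "j = 1" "j' = 3"
  proof -
    have "y = y'" "B x y = B x' y'" using eq xy xy' that by (simp_all add: mrow_def)
    then show ?thesis using inj_onD[OF iB2[OF xy(2)], of x x'] xy xy' by simp
  qed
  have e6: "x = x' \<and> y = y'" if "j = 2" "j' = 3"
  proof -
    have "A x y = A x' y'" "B x y = B x' y'" using eq xy xy' that by (simp_all add: mrow_def)
    then have "(\<lambda>(x,y). (A x y, B x y)) (x,y) = (\<lambda>(x,y). (A x y, B x y)) (x',y')" by simp
    from inj_onD[OF iAB this] show ?thesis using xy xy' by simp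
  qed
  have "j' = 1 \<and> j = 0 \<or> j' = 2 \<and> j = 0 \<or> j' = 3 \<and> j = 0 \<or> j' = 2 \<and> j = 1 \<or> j' = 3 \<and> j = 1 \<or> j' = 3 \<and> j = 2"
    using jj by auto
  then have "x = x' \<and> y = y'" using e1 e2 e3 e4 e5 e6 by blast
  then show "r = r'" using xy xy' by simp
qed

definition tabcheck :: "nat \<Rightarrow> nat list list \<Rightarrow> nat list list \<Rightarrow> bool" where
  "tabcheck n T U \<longleftrightarrow> (\<forall>x\<in>set [0..<n]. \<forall>y\<in>set [0..<n]. T!x!y < n \<and> U!x!y < n) \<and>
     (\<forall>x\<in>set [0..<n]. distinct (map (\<lambda>y. T!x!y) [0..<n]) \<and> distinct (map (\<lambda>y. U!x!y) [0..<n])) \<and>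
     (\<forall>y\<in>set [0..<n]. distinct (map (\<lambda>x. T!x!y) [0..<n]) \<and> distinct (map (\<lambda>x. U!x!y) [0..<n])) \<and>
     distinct (map (\<lambda>(x,y). (T!x!y, U!x!y)) (List.product [0..<n] [0..<n]))"

definition tabR :: "nat \<Rightarrow> nat list list \<Rightarrow> nat list list \<Rightarrow> (nat \<Rightarrow> nat) set" where
  "tabR n T U = (\<lambda>(x,y). mrow x y (T!x!y) (U!x!y)) ` ({..<n}\<times>{..<n})"

lemma tab_OA:
  assumes "tabcheck n T U"
  shows "OA 4 n (tabR n T U)"
proof -
  have s: "set [0..<n] = {..<n}" by auto
  have s2: "set (List.product [0..<n] [0..<n]) = {..<n}\<times>{..<n}" by auto
  note c = assms[unfolded tabcheck_def distinct_map s s2]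
  have c1: "\<And>x y. x<n \<Longrightarrow> y<n \<Longrightarrow> T!x!y < n \<and> U!x!y < n" using c by blast
  have c2: "\<And>x. x<n \<Longrightarrow> inj_on (\<lambda>y. T!x!y) {..<n}" "\<And>x. x<n \<Longrightarrow> inj_on (\<lambda>y. U!x!y) {..<n}"
    using c by blast+
  have c3: "\<And>y. y<n \<Longrightarrow> inj_on (\<lambda>x. T!x!y) {..<n}" "\<And>y. y<n \<Longrightarrow> inj_on (\<lambda>x. U!x!y) {..<n}"
    using c by blast+
  have c4: "inj_on (\<lambda>(x,y). (T!x!y, U!x!y)) ({..<n}\<times>{..<n})" using c by blast
  show ?thesis
    unfolding tabR_def by (rule mols_OA[of n "\<lambda>x y. T!x!y" "\<lambda>x y. U!x!y"]) (use c1 c2 c3 c4 in auto)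
qed

definition linrow :: "nat \<Rightarrow> nat \<Rightarrow> nat \<Rightarrow> nat \<Rightarrow> nat \<Rightarrow> nat" where
  "linrow k n a b = (\<lambda>j. if j < k then (if j = 0 then a else nat ((int (j-1) * int a + int b) mod int n)) else 0)"

lemma int_mod_eq_lt: fixes x y n :: int
  assumes "0 \<le> x" "x < n" "0 \<le> y" "y < n" "n dvd (x - y)" shows "x = y"
proof -
  have "x mod n = y mod n" using assms(5) by (simp add: mod_eq_dvd_iff)
  then show ?thesis using assms by simp
qed

lemma lin_OA:
  assumes n: "n > 0" and cop: "\<And>d. 0 < d \<Longrightarrow> d + 1 < k \<Longrightarrow> coprime (int d) (int n)"
  shows "OA k n ((\<lambda>(a,b). linrow k n a b) ` ({..<n}\<times>{..<n}))" (is "OA k n ?R")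
proof (rule OA_intro)
  fix r :: "nat \<Rightarrow> nat" and j :: nat assume "r \<in> ?R" "j < k" then show "r j < n"
    using n by (auto simp: linrow_def nat_less_iff)
next
  fix r :: "nat \<Rightarrow> nat" and j :: nat assume "r \<in> ?R" "k \<le> j" then show "r j = 0"
    by (auto simp: linrow_def)
next
  fix j j' v w :: nat assume jj: "j < j'" "j' < k" and vw: "v < n" "w < n"
  have mem: "linrow k n a b \<in> ?R" if "a<n" "b<n" for a b using that by auto
  have nn: "(0::int) < int n" using n by simp
  show "\<exists>r\<in>?R. r j = v \<and> r j' = w"
  proof (cases "j = 0")
    case True
    define b where "b = nat ((int w - int (j'-1) * int v) mod int n)"
    have b: "int b = (int w - int (j'-1) * int v) mod int n" using nn by (simp add: b_def)
    have bn: "b < n" using nn by (simp add: b_def nat_less_iff)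
    have "(int (j'-1) * int v + int b) mod int n = int w mod int n"
      unfolding b by (simp add: mod_add_right_eq)
    also have "\<dots> = int w" using vw by simp
    finally have "linrow k n v b j' = w" using jj True by (simp add: linrow_def)
    moreover have "linrow k n v b j = v" using True jj by (simp add: linrow_def)
    ultimately show ?thesis using mem[OF vw(1) bn] by blast
  next
    case False
    define d where "d = j' - j"
    have d: "0 < d" "d + 1 < k" using jj False by (auto simp: d_def)
    have "coprime (int d) (int n)" using cop[OF d] .
    then have "gcd (int d) (int n) = 1" by simp
    then obtain u z where uz: "u * int d + z * int n = 1" using bezout_int[of "int d" "int n"] by auto
    define a where "a = nat ((u * (int w - int v)) mod int n)"
    have a: "int a = (u * (int w - int v)) mod int n" using nn by (simp add: a_def)
    have an: "a < n" using nn by (simp add: a_def nat_less_iff)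
    define b where "b = nat ((int v - int (j-1) * int a) mod int n)"
    have b: "int b = (int v - int (j-1) * int a) mod int n" using nn by (simp add: b_def)
    have bn: "b < n" using nn by (simp add: b_def nat_less_iff)
    have "(int (j-1) * int a + int b) mod int n = int v mod int n"
      unfolding b by (simp add: mod_add_right_eq)
    also have "\<dots> = int v" using vw by simp
    finally have r1: "linrow k n a b j = v" using jj False by (simp add: linrow_def)
    obtain k1 where k1: "int a - u * (int w - int v) = int n * k1"
      using a by (metis dvd_def mod_mod_trivial mod_eq_dvd_iff)
    obtain k2 where k2: "int b - (int v - int (j-1) * int a) = int n * k2"
      using b by (metis dvd_def mod_mod_trivial mod_eq_dvd_iff)
    have dj: "int (j'-1) = int (j-1) + int d" using jj False by (simp add: d_def)
    have "int (j'-1) * int a + int b - int w = int n * (k2 + int d * k1 - z * (int w - int v))"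
    proof -
      have "int (j'-1) * int a + int b - int w
          = (int b - (int v - int (j-1) * int a)) + int d * (int a - u * (int w - int v))
            + (u * int d - 1) * (int w - int v)"
        unfolding dj by (simp add: algebra_simps)
      also have "\<dots> = int n * k2 + int d * (int n * k1) + (- z * int n) * (int w - int v)"
      proof -
        have ud: "u * int d - 1 = - z * int n" using uz by (simp add: algebra_simps)
        show ?thesis unfolding k1 k2 ud ..
      qed
      finally show ?thesis by (simp add: algebra_simps)
    qed
    then have "(int (j'-1) * int a + int b) mod int n = int w mod int n"
      by (metis dvd_triv_left mod_eq_dvd_iff)
    also have "\<dots> = int w" using vw by simp
    finally have r2: "linrow k n a b j' = w" using jj by (simp add: linrow_def)
    show ?thesis using mem[OF an bn] r1 r2 by blast
  qed
next
  fix j j' :: nat and r r' :: "nat \<Rightarrow> nat" assume jj: "j < j'" "j' < k" and rr: "r \<in> ?R" "r' \<in> ?R" and eq: "r j = r' j" "r j' = r' j'"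
  obtain a b where ab: "a<n" "b<n" "r = linrow k n a b" using rr(1) by auto
  obtain a' b' where ab': "a'<n" "b'<n" "r' = linrow k n a' b'" using rr(2) by auto
  have nn: "(0::int) < int n" using n by simp
  have col: "int n dvd ((int (i-1) * int a + int b) - (int (i-1) * int a' + int b'))"
    if "0 < i" "i < k" "r i = r' i" for i
  proof -
    have "nat ((int (i-1) * int a + int b) mod int n) = nat ((int (i-1) * int a' + int b') mod int n)"
      using that ab ab' by (simp add: linrow_def)
    then have "(int (i-1) * int a + int b) mod int n = (int (i-1) * int a' + int b') mod int n"
      using nn by (simp add: eq_nat_nat_iff)
    then show ?thesis by (simp add: mod_eq_dvd_iff)
  qed
  have "a = a'"
  proof (cases "j = 0")
    case True then show ?thesis using eq(1) ab ab' jj by (simp add: linrow_def)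
  next
    case False
    define d where "d = j' - j"
    have d: "0 < d" "d + 1 < k" using jj False by (auto simp: d_def)
    have cp: "coprime (int d) (int n)" using cop[OF d] .
    have c1: "int n dvd ((int (j-1) * int a + int b) - (int (j-1) * int a' + int b'))"
      using col[of j] False jj eq by simp
    have c2: "int n dvd ((int (j'-1) * int a + int b) - (int (j'-1) * int a' + int b'))"
      using col[of j'] False jj eq by simp
    have dj: "int (j'-1) = int (j-1) + int d" using jj False by (simp add: d_def)
    have "int n dvd (((int (j'-1) * int a + int b) - (int (j'-1) * int a' + int b'))
                  - ((int (j-1) * int a + int b) - (int (j-1) * int a' + int b')))"
      using c1 c2 by (rule dvd_diff[rotated])
    moreover have "((int (j'-1) * int a + int b) - (int (j'-1) * int a' + int b'))
                  - ((int (j-1) * int a + int b) - (int (j-1) * int a' + int b')) = int d * (int a - int a')"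
      unfolding dj by (simp add: algebra_simps)
    ultimately have "int n dvd int d * (int a - int a')" by simp
    then have "int n dvd (int a - int a')"
      using cp by (metis coprime_commute coprime_dvd_mult_right_iff)
    then show ?thesis using int_mod_eq_lt[of "int a" "int n" "int a'"] ab ab' by simp
  qed
  moreover have "b = b'"
  proof -
    have "0 < j'" using jj by simp
    have "int n dvd ((int (j'-1) * int a + int b) - (int (j'-1) * int a' + int b'))"
      using col[of j'] jj eq by simp
    then have "int n dvd (int b - int b')" using \<open>a = a'\<close> by simp
    then show ?thesis using int_mod_eq_lt[of "int b" "int n" "int b'"] ab ab' by simp
  qed
  ultimately show "r = r'" using ab ab' by simp
qed

definition prodrow :: "nat \<Rightarrow> nat \<Rightarrow> (nat\<Rightarrow>nat) \<Rightarrow> (nat\<Rightarrow>nat) \<Rightarrow> nat \<Rightarrow> nat" where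
  "prodrow k m r s = (\<lambda>j. if j < k then r j * m + s j else 0)"

lemma lt_mult_add: "x < (n::nat) \<Longrightarrow> y < m \<Longrightarrow> x * m + y < n * m"
proof -
  assume a: "x < n" "y < m"
  have "(x + 1) * m \<le> n * m" using a(1) by (intro mult_le_mono1) simp
  then show ?thesis using a(2) by (simp add: algebra_simps)
qed

lemma prod_OA:
  assumes R: "OA k n R" and S: "OA k m S"
  shows "OA k (n*m) ((\<lambda>(r,s). prodrow k m r s) ` (R \<times> S))" (is "OA k _ ?P")
proof (rule OA_intro)
  fix r :: "nat \<Rightarrow> nat" and j :: nat assume "r \<in> ?P" "j < k" then show "r j < n * m"
    using OA_val[OF R] OA_val[OF S] lt_mult_add by (auto simp: prodrow_def)
next
  fix r :: "nat \<Rightarrow> nat" and j :: nat assume "r \<in> ?P" "k \<le> j" then show "r j = 0"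
    by (auto simp: prodrow_def)
next
  fix j j' a b :: nat assume jj: "j < j'" "j' < k" and ab: "a < n*m" "b < n*m"
  then have m: "0 < m" by (cases m) auto
  have "a div m < n" "b div m < n" using ab m by (simp_all add: div_less_iff_less_mult)
  then obtain r where r: "r \<in> R" "r j = a div m" "r j' = b div m" using OA_ex[OF R, of j j'] jj by auto
  have "a mod m < m" "b mod m < m" using m by simp_all
  then obtain s where s: "s \<in> S" "s j = a mod m" "s j' = b mod m" using OA_ex[OF S, of j j' "a mod m" "b mod m"] jj by auto
  have "prodrow k m r s j = a" "prodrow k m r s j' = b" using r s jj by (simp_all add: prodrow_def)
  moreover have "prodrow k m r s \<in> ?P" using r s by auto
  ultimately show "\<exists>x\<in>?P. x j = a \<and> x j' = b" by blast
next
  fix j j' :: nat and x x' :: "nat \<Rightarrow> nat" assume jj: "j < j'" "j' < k" and xx: "x \<in> ?P" "x' \<in> ?P"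
    and eq: "x j = x' j" "x j' = x' j'"
  obtain r s where rs: "r \<in> R" "s \<in> S" "x = prodrow k m r s" using xx(1) by auto
  obtain r' s' where rs': "r' \<in> R" "s' \<in> S" "x' = prodrow k m r' s'" using xx(2) by auto
  have dm: "p = p' \<and> q = q'" if H: "p * m + q = p' * m + q'" "q < m" "q' < m" for p q p' q' :: nat
  proof -
    have "(p * m + q) div m = p" "(p * m + q) mod m = q" using H(2) by simp_all
    moreover have "(p' * m + q') div m = p'" "(p' * m + q') mod m = q'" using H(3) by simp_all
    ultimately show ?thesis using H(1) by metis
  qed
  have e1: "r j = r' j \<and> s j = s' j"
    using dm[of "r j" "s j" "r' j" "s' j"] eq(1) rs rs' jj OA_val[OF S, of s j] OA_val[OF S, of s' j]
    by (simp add: prodrow_def)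
  have e2: "r j' = r' j' \<and> s j' = s' j'"
    using dm[of "r j'" "s j'" "r' j'" "s' j'"] eq(2) rs rs' jj OA_val[OF S, of s j'] OA_val[OF S, of s' j']
    by (simp add: prodrow_def)
  have "r = r'" using OA_uniq[OF R, of j j' r r'] jj rs rs' e1 e2 by simp
  moreover have "s = s'" using OA_uniq[OF S, of j j' s s'] jj rs rs' e1 e2 by simp
  ultimately show "x = x'" using rs rs' by simp
qed

definition all3 :: "nat \<Rightarrow> nat" where "all3 = (\<lambda>j. if j < 4 then 3 else 0)"
definition wrow_a :: "(nat \<Rightarrow> nat) \<Rightarrow> (nat \<Rightarrow> nat) \<Rightarrow> nat \<Rightarrow> nat" where
  "wrow_a r c = (\<lambda>j. if j < 4 then 3 * r j + c j else 0)"
definition wrow_b :: "nat \<Rightarrow> (nat \<Rightarrow> nat) \<Rightarrow> (nat \<Rightarrow> nat) \<Rightarrow> nat \<Rightarrow> nat" where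
  "wrow_b t r c = (\<lambda>j. if j < 4 then (if c j = 3 then 3*t + r 4 else 3 * r j + c j) else 0)"
definition wrow_c :: "nat \<Rightarrow> (nat \<Rightarrow> nat) \<Rightarrow> nat \<Rightarrow> nat" where
  "wrow_c t y = (\<lambda>j. if j < 4 then 3*t + y j else 0)"

lemma three_div: "3 * (x::nat) + y = 3 * x' + y' \<Longrightarrow> y < 3 \<Longrightarrow> y' < 3 \<Longrightarrow> x = x' \<and> y = y'"
  by presburger

lemma wilson_OA:
  assumes R5: "OA 5 t R5" and Ru: "OA 4 u Ru" and ut: "u \<le> t"
   and R3: "OA 4 3 R3" and R4: "OA 4 4 R4" and all: "all3 \<in> R4"
  defines "Wa \<equiv> (\<lambda>(r,c). wrow_a r c) ` {(r,c). r\<in>R5 \<and> u \<le> r 4 \<and> c\<in>R3}"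
  defines "Wb \<equiv> (\<lambda>(r,c). wrow_b t r c) ` {(r,c). r\<in>R5 \<and> r 4 < u \<and> c\<in>R4 \<and> c \<noteq> all3}"
  defines "Wc \<equiv> wrow_c t ` Ru"
  shows "OA 4 (3*t+u) (Wa \<union> Wb \<union> Wc)"
proof -
  have r5v: "r j < t" if H: "r \<in> R5" "j < 5" for r j using OA_val[OF R5] H by blast
  have r3v: "c j < 3" if H: "c \<in> R3" "j < 4" for c j using OA_val[OF R3] H by blast
  have r4v: "c j < 4" if H: "c \<in> R4" "j < 4" for c j using OA_val[OF R4] H by blast
  have ruv: "y j < u" if H: "y \<in> Ru" "j < 4" for y j using OA_val[OF Ru] H by blast
  have one3: "\<not> (c j = 3 \<and> c j' = 3)" if H: "c \<in> R4" "c \<noteq> all3" "j < 4" "j' < 4" "j \<noteq> j'" for c j j'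
  proof
    assume h: "c j = 3 \<and> c j' = 3"
    have "c = all3" using OA_uniq[OF R4 H(3,4,5) H(1) all] h H(3,4) by (simp add: all3_def)
    then show False using H(2) by simp
  qed
  have Fa: "\<rho> j < 3*t" if H: "\<rho> \<in> Wa" "j < 4" for \<rho> j
  proof -
    obtain r c where rc: "r\<in>R5" "c\<in>R3" "\<rho> = wrow_a r c" using H(1) by (auto simp: Wa_def)
    have "r j < t" "c j < 3" using rc H r5v r3v by auto
    then show ?thesis using rc H by (simp add: wrow_a_def)
  qed
  have Fc: "3*t \<le> \<rho> j" if H: "\<rho> \<in> Wc" "j < 4" for \<rho> j
    using H by (auto simp: Wc_def wrow_c_def)
  have Fb: "(c j = 3 \<and> \<rho> j = 3*t + r 4) \<or> (c j < 3 \<and> \<rho> j = 3 * r j + c j \<and> \<rho> j < 3*t)"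
    if "r\<in>R5" "c\<in>R4" "\<rho> = wrow_b t r c" "j < 4" for \<rho> r c j
  proof (cases "c j = 3")
    case True then show ?thesis using that by (simp add: wrow_b_def)
  next
    case False
    have "c j < 3" using r4v[OF that(2,4)] False by simp
    moreover have "r j < t" using r5v[OF that(1)] that(4) by simp
    ultimately show ?thesis using that False by (simp add: wrow_b_def)
  qed
  have m34: "x mod 3 < 4" for x :: nat
  proof -
    have "x mod 3 < 3" by simp
    then show ?thesis by linarith
  qed
  have mod3ne: "x mod 3 \<noteq> 3" for x :: nat
    using mod_less_divisor[of 3 x] by linarith
  show ?thesis
  proof (rule OA_intro)
    fix \<rho> :: "nat \<Rightarrow> nat" and j :: nat assume h: "\<rho> \<in> Wa \<union> Wb \<union> Wc" "j < 4"
    show "\<rho> j < 3*t+u"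
    proof -
      { assume "\<rho> \<in> Wa" then have ?thesis using Fa h(2) by fastforce }
      moreover
      { assume "\<rho> \<in> Wb"
        then obtain r c where rc: "r\<in>R5" "r 4 < u" "c\<in>R4" "c \<noteq> all3" "\<rho> = wrow_b t r c"
          by (auto simp: Wb_def)
        have ?thesis using Fb[OF rc(1,3,5) h(2)] rc(2) by auto }
      moreover
      { assume "\<rho> \<in> Wc"
        then obtain y where "y \<in> Ru" "\<rho> = wrow_c t y" by (auto simp: Wc_def)
        then have ?thesis using ruv h(2) by (simp add: wrow_c_def) }
      ultimately show ?thesis using h(1) by blast
    qed
  next
    fix \<rho> :: "nat \<Rightarrow> nat" and j :: nat assume h: "\<rho> \<in> Wa \<union> Wb \<union> Wc" "4 \<le> j"
    then show "\<rho> j = 0" by (auto simp: Wa_def Wb_def Wc_def wrow_a_def wrow_b_def wrow_c_def)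
  next
    fix j j' a b :: nat assume jj: "j < j'" "j' < 4" and ab: "a < 3*t+u" "b < 3*t+u"
    have jn: "j \<noteq> j'" "j < 5" "j' < 5" "j < 4" "j \<noteq> 4" "j' \<noteq> 4" using jj by auto
    show "\<exists>\<rho>\<in>Wa \<union> Wb \<union> Wc. \<rho> j = a \<and> \<rho> j' = b"
    proof (cases "a < 3*t")
      case a3: True
      show ?thesis
      proof (cases "b < 3*t")
        case b3: True
        have "a div 3 < t" "b div 3 < t" using a3 b3 by auto
        then obtain r where r: "r \<in> R5" "r j = a div 3" "r j' = b div 3"
          using OA_ex[OF R5, of j j'] jn by auto
        show ?thesis
        proof (cases "u \<le> r 4")
          case True
          obtain c where c: "c \<in> R3" "c j = a mod 3" "c j' = b mod 3"
            using OA_ex[OF R3, of j j' "a mod 3" "b mod 3"] jj by auto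
          have "wrow_a r c \<in> Wa" using r c True by (auto simp: Wa_def)
          moreover have "wrow_a r c j = a" "wrow_a r c j' = b" using r c jj by (simp_all add: wrow_a_def)
          ultimately show ?thesis by blast
        next
          case False
          obtain c where c: "c \<in> R4" "c j = a mod 3" "c j' = b mod 3"
            using OA_ex[OF R4, of j j' "a mod 3" "b mod 3"] jj m34 by auto
          have "c \<noteq> all3" using c jj by (auto simp: all3_def)
          then have "wrow_b t r c \<in> Wb" using r c False by (auto simp: Wb_def)
          moreover have "a mod 3 \<noteq> 3" "b mod 3 \<noteq> 3" by (simp_all add: less_not_refl3)
          moreover have "wrow_b t r c j = a" "wrow_b t r c j' = b" using r c jj calculation by (simp_all add: wrow_b_def)
          ultimately show ?thesis by blast
        qed
      next
        case b3: False
        have "a div 3 < t" "b - 3*t < t" using a3 b3 ab ut by auto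
        then obtain r where r: "r \<in> R5" "r j = a div 3" "r 4 = b - 3*t"
          using OA_ex[OF R5, of j 4] jn by auto
        obtain c where c: "c \<in> R4" "c j = a mod 3" "c j' = 3"
          using OA_ex[OF R4, of j j' "a mod 3" 3] jj m34 by auto
        have "c \<noteq> all3" using c jj by (auto simp: all3_def)
        moreover have "r 4 < u" using r ab b3 by simp
        ultimately have "wrow_b t r c \<in> Wb" using r c by (auto simp: Wb_def)
        moreover have "wrow_b t r c j = a" "wrow_b t r c j' = b" using r c jj b3 mod3ne by (simp_all add: wrow_b_def)
        ultimately show ?thesis by blast
      qed
    next
      case a3: False
      show ?thesis
      proof (cases "b < 3*t")
        case b3: True
        have "b div 3 < t" "a - 3*t < t" using a3 b3 ab ut by auto
        then obtain r where r: "r \<in> R5" "r j' = b div 3" "r 4 = a - 3*t"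
          using OA_ex[OF R5, of j' 4] jn by auto
        obtain c where c: "c \<in> R4" "c j = 3" "c j' = b mod 3"
          using OA_ex[OF R4, of j j' 3 "b mod 3"] jj m34 by auto
        have "c \<noteq> all3" using c jj by (auto simp: all3_def)
        moreover have "r 4 < u" using r ab a3 by simp
        ultimately have "wrow_b t r c \<in> Wb" using r c by (auto simp: Wb_def)
        moreover have "wrow_b t r c j = a" "wrow_b t r c j' = b" using r c jj a3 mod3ne by (simp_all add: wrow_b_def)
        ultimately show ?thesis by blast
      next
        case b3: False
        have "a - 3*t < u" "b - 3*t < u" using a3 b3 ab by auto
        then obtain y where y: "y \<in> Ru" "y j = a - 3*t" "y j' = b - 3*t"
          using OA_ex[OF Ru, of j j'] jj by auto
        have "wrow_c t y \<in> Wc" using y by (simp add: Wc_def)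
        moreover have "wrow_c t y j = a" "wrow_c t y j' = b" using y jj a3 b3 by (simp_all add: wrow_c_def)
        ultimately show ?thesis by blast
      qed
    qed
  next
    fix j j' :: nat and \<rho> \<rho>' :: "nat \<Rightarrow> nat" assume jj: "j < j'" "j' < 4"
      and rr: "\<rho> \<in> Wa \<union> Wb \<union> Wc" "\<rho>' \<in> Wa \<union> Wb \<union> Wc" and eq: "\<rho> j = \<rho>' j" "\<rho> j' = \<rho>' j'"
    have jn: "j \<noteq> j'" "j < 5" "j' < 5" "j < 4" "j \<noteq> 4" "j' \<noteq> 4" using jj by auto
    have ab_no: False if H: "\<sigma> \<in> Wa" "\<sigma>' \<in> Wb" "\<sigma> j = \<sigma>' j" "\<sigma> j' = \<sigma>' j'" for \<sigma> \<sigma>'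
    proof -
      obtain r c where rc: "r\<in>R5" "u \<le> r 4" "c\<in>R3" "\<sigma> = wrow_a r c" using H(1) by (auto simp: Wa_def)
      obtain r' c' where rc': "r'\<in>R5" "r' 4 < u" "c'\<in>R4" "c' \<noteq> all3" "\<sigma>' = wrow_b t r' c'"
        using H(2) by (auto simp: Wb_def)
      have s1: "\<sigma> j < 3*t" "\<sigma> j' < 3*t" using Fa H(1) jj by auto
      have "c' j < 3 \<and> \<sigma>' j = 3 * r' j + c' j" using Fb[OF rc'(1,3,5), of j] s1 H(3) jj by auto
      moreover have "c' j' < 3 \<and> \<sigma>' j' = 3 * r' j' + c' j'" using Fb[OF rc'(1,3,5), of j'] s1 H(4) jj by auto
      ultimately have "r j = r' j" "r j' = r' j'"
        using three_div[of "r j" "c j" "r' j" "c' j"] three_div[of "r j'" "c j'" "r' j'" "c' j'"]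
          H(3,4) rc r3v jj by (auto simp: wrow_a_def)
      then have "r = r'" using OA_uniq[OF R5, of j j' r r'] jn rc rc' by simp
      then show False using rc rc' by simp
    qed
    have ac_no: False if H: "\<sigma> \<in> Wa" "\<sigma>' \<in> Wc" "\<sigma> j = \<sigma>' j" for \<sigma> \<sigma>'
      using Fa[OF H(1), of j] Fc[OF H(2), of j] H(3) jj by simp
    have bc_no: False if H: "\<sigma> \<in> Wb" "\<sigma>' \<in> Wc" "\<sigma> j = \<sigma>' j" "\<sigma> j' = \<sigma>' j'" for \<sigma> \<sigma>'
    proof -
      obtain r c where rc: "r\<in>R5" "r 4 < u" "c\<in>R4" "c \<noteq> all3" "\<sigma> = wrow_b t r c"
        using H(1) by (auto simp: Wb_def)
      have "3*t \<le> \<sigma> j" "3*t \<le> \<sigma> j'" using Fc[OF H(2)] H(3,4) jj by auto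
      then have "c j = 3" "c j' = 3" using Fb[OF rc(1,3,5), of j] Fb[OF rc(1,3,5), of j'] jj by auto
      then show False using one3[OF rc(3,4), of j j'] jj by simp
    qed
    have aa: "\<rho> = \<rho>'" if H: "\<rho> \<in> Wa" "\<rho>' \<in> Wa"
    proof -
      obtain r c where rc: "r\<in>R5" "u \<le> r 4" "c\<in>R3" "\<rho> = wrow_a r c" using H(1) by (auto simp: Wa_def)
      obtain r' c' where rc': "r'\<in>R5" "u \<le> r' 4" "c'\<in>R3" "\<rho>' = wrow_a r' c'" using H(2) by (auto simp: Wa_def)
      have "r j = r' j \<and> c j = c' j" "r j' = r' j' \<and> c j' = c' j'"
        using three_div[of "r j" "c j" "r' j" "c' j"] three_div[of "r j'" "c j'" "r' j'" "c' j'"]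
          eq rc rc' r3v jj by (auto simp: wrow_a_def)
      then have "r = r'" "c = c'" using OA_uniq[OF R5, of j j' r r'] OA_uniq[OF R3, of j j' c c'] jn jj rc rc' by auto
      then show ?thesis using rc rc' by simp
    qed
    have bb: "\<rho> = \<rho>'" if H: "\<rho> \<in> Wb" "\<rho>' \<in> Wb"
    proof -
      obtain r c where rc: "r\<in>R5" "r 4 < u" "c\<in>R4" "c \<noteq> all3" "\<rho> = wrow_b t r c"
        using H(1) by (auto simp: Wb_def)
      obtain r' c' where rc': "r'\<in>R5" "r' 4 < u" "c'\<in>R4" "c' \<noteq> all3" "\<rho>' = wrow_b t r' c'"
        using H(2) by (auto simp: Wb_def)
      have col: "c i = c' i \<and> (c i = 3 \<longrightarrow> r 4 = r' 4) \<and> (c i \<noteq> 3 \<longrightarrow> r i = r' i)"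
        if C: "i < 4" "\<rho> i = \<rho>' i" for i
      proof -
        have A: "(c i = 3 \<and> \<rho> i = 3*t + r 4) \<or> (c i < 3 \<and> \<rho> i = 3 * r i + c i \<and> \<rho> i < 3*t)"
          using Fb[OF rc(1,3,5) C(1)] .
        have B: "(c' i = 3 \<and> \<rho>' i = 3*t + r' 4) \<or> (c' i < 3 \<and> \<rho>' i = 3 * r' i + c' i \<and> \<rho>' i < 3*t)"
          using Fb[OF rc'(1,3,5) C(1)] .
        show ?thesis using A B C(2) three_div[of "r i" "c i" "r' i" "c' i"] by auto
      qed
      have cj: "c j = c' j" "c j' = c' j'" using col[of j] col[of j'] eq jj by auto
      then have "c = c'" using OA_uniq[OF R4, of j j' c c'] jj rc rc' by simp
      moreover have "r = r'"
      proof (cases "c j = 3")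
        case True
        then have "c j' \<noteq> 3" using one3[OF rc(3,4), of j j'] jj by auto
        then have "r j' = r' j'" "r 4 = r' 4" using col[of j] col[of j'] eq jj True by auto
        then show ?thesis using OA_uniq[OF R5, of j' 4 r r'] jn rc rc' by simp
      next
        case False
        then have rj: "r j = r' j" using col[of j] eq jj by auto
        show ?thesis
        proof (cases "c j' = 3")
          case True
          then have "r 4 = r' 4" using col[of j'] eq jj by auto
          then show ?thesis using rj OA_uniq[OF R5, of j 4 r r'] jn rc rc' by simp
        next
          case False
          then have "r j' = r' j'" using col[of j'] eq jj by auto
          then show ?thesis using rj OA_uniq[OF R5, of j j' r r'] jn rc rc' by simp
        qed
      qed
      ultimately show ?thesis using rc rc' by simp
    qed
    have cc: "\<rho> = \<rho>'" if H: "\<rho> \<in> Wc" "\<rho>' \<in> Wc"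
    proof -
      obtain y where y: "y \<in> Ru" "\<rho> = wrow_c t y" using H(1) by (auto simp: Wc_def)
      obtain y' where y': "y' \<in> Ru" "\<rho>' = wrow_c t y'" using H(2) by (auto simp: Wc_def)
      have "y j = y' j" "y j' = y' j'" using eq y y' jj by (auto simp: wrow_c_def)
      then have "y = y'" using OA_uniq[OF Ru, of j j' y y'] jj y y' by simp
      then show ?thesis using y y' by simp
    qed
    show "\<rho> = \<rho>'"
      using rr aa bb cc ab_no[of \<rho> \<rho>'] ab_no[of \<rho>' \<rho>] ac_no[of \<rho> \<rho>'] ac_no[of \<rho>' \<rho>]
        bc_no[of \<rho> \<rho>'] bc_no[of \<rho>' \<rho>] eq by auto
  qed
qed

definition A4 :: "nat list list" where "A4 = [[0, 3, 1, 2], [2, 1, 3, 0], [3, 0, 2, 1], [1, 2, 0, 3]]"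

definition B4 :: "nat list list" where "B4 = [[0, 2, 3, 1], [3, 1, 0, 2], [1, 3, 2, 0], [2, 0, 1, 3]]"

lemma tc4: "tabcheck 4 A4 B4" by code_simp

definition A8 :: "nat list list" where "A8 = [[0, 3, 6, 5, 7, 4, 1, 2], [2, 1, 4, 7, 5, 6, 3, 0], [4, 7, 2, 1, 3, 0, 5, 6], [6, 5, 0, 3, 1, 2, 7, 4], [3, 0, 5, 6, 4, 7, 2, 1], [1, 2, 7, 4, 6, 5, 0, 3], [7, 4, 1, 2, 0, 3, 6, 5], [5, 6, 3, 0, 2, 1, 4, 7]]"

definition B8 :: "nat list list" where "B8 = [[0, 2, 4, 6, 3, 1, 7, 5], [3, 1, 7, 5, 0, 2, 4, 6], [6, 4, 2, 0, 5, 7, 1, 3], [5, 7, 1, 3, 6, 4, 2, 0], [7, 5, 3, 1, 4, 6, 0, 2], [4, 6, 0, 2, 7, 5, 3, 1], [1, 3, 5, 7, 2, 0, 6, 4], [2, 0, 6, 4, 1, 3, 5, 7]]"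

lemma tc8: "tabcheck 8 A8 B8" by code_simp

definition A10 :: "nat list list" where "A10 = [[9, 3, 6, 4, 7, 8, 5, 2, 1, 0], [6, 9, 4, 0, 5, 7, 8, 3, 2, 1], [8, 0, 9, 5, 1, 6, 7, 4, 3, 2], [7, 8, 1, 9, 6, 2, 0, 5, 4, 3], [1, 7, 8, 2, 9, 0, 3, 6, 5, 4], [4, 2, 7, 8, 3, 9, 1, 0, 6, 5], [2, 5, 3, 7, 8, 4, 9, 1, 0, 6], [3, 4, 5, 6, 0, 1, 2, 9, 8, 7], [0, 1, 2, 3, 4, 5, 6, 8, 7, 9], [5, 6, 0, 1, 2, 3, 4, 7, 9, 8]]"

definition B10 :: "nat list list" where "B10 = [[3, 1, 9, 7, 5, 0, 8, 2, 4, 6], [8, 4, 2, 9, 7, 6, 1, 3, 5, 0], [2, 8, 5, 3, 9, 7, 0, 4, 6, 1], [1, 3, 8, 6, 4, 9, 7, 5, 0, 2], [7, 2, 4, 8, 0, 5, 9, 6, 1, 3], [9, 7, 3, 5, 8, 1, 6, 0, 2, 4], [0, 9, 7, 4, 6, 8, 2, 1, 3, 5], [5, 6, 0, 1, 2, 3, 4, 9, 7, 8], [4, 5, 6, 0, 1, 2, 3, 8, 9, 7], [6, 0, 1, 2, 3, 4, 5, 7, 8, 9]]"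

lemma tc10: "tabcheck 10 A10 B10" by code_simp

definition A14 :: "nat list list" where "A14 = [[12, 10, 11, 0, 7, 1, 8, 13, 2, 4, 9, 5, 6, 3], [10, 12, 0, 11, 1, 8, 2, 9, 13, 3, 5, 6, 7, 4], [6, 0, 12, 1, 11, 2, 9, 3, 10, 13, 4, 7, 8, 5], [5, 7, 1, 12, 2, 11, 3, 10, 4, 0, 13, 8, 9, 6], [13, 6, 8, 2, 12, 3, 11, 4, 0, 5, 1, 9, 10, 7], [2, 13, 7, 9, 3, 12, 4, 11, 5, 1, 6, 10, 0, 8], [7, 3, 13, 8, 10, 4, 12, 5, 11, 6, 2, 0, 1, 9], [3, 8, 4, 13, 9, 0, 5, 12, 6, 11, 7, 1, 2, 10], [8, 4, 9, 5, 13, 10, 1, 6, 12, 7, 11, 2, 3, 0], [11, 9, 5, 10, 6, 13, 0, 2, 7, 12, 8, 3, 4, 1], [9, 11, 10, 6, 0, 7, 13, 1, 3, 8, 12, 4, 5, 2], [0, 1, 2, 3, 4, 5, 6, 7, 8, 9, 10, 12, 13, 11], [4, 5, 6, 7, 8, 9, 10, 0, 1, 2, 3, 11, 12, 13], [1, 2, 3, 4, 5, 6, 7, 8, 9, 10, 0, 13, 11, 12]]"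

definition B14 :: "nat list list" where "B14 = [[4, 1, 7, 12, 0, 2, 8, 5, 9, 13, 11, 10, 3, 6], [11, 5, 2, 8, 12, 1, 3, 9, 6, 10, 13, 0, 4, 7], [13, 11, 6, 3, 9, 12, 2, 4, 10, 7, 0, 1, 5, 8], [1, 13, 11, 7, 4, 10, 12, 3, 5, 0, 8, 2, 6, 9], [9, 2, 13, 11, 8, 5, 0, 12, 4, 6, 1, 3, 7, 10], [2, 10, 3, 13, 11, 9, 6, 1, 12, 5, 7, 4, 8, 0], [8, 3, 0, 4, 13, 11, 10, 7, 2, 12, 6, 5, 9, 1], [7, 9, 4, 1, 5, 13, 11, 0, 8, 3, 12, 6, 10, 2], [12, 8, 10, 5, 2, 6, 13, 11, 1, 9, 4, 7, 0, 3], [5, 12, 9, 0, 6, 3, 7, 13, 11, 2, 10, 8, 1, 4], [0, 6, 12, 10, 1, 7, 4, 8, 13, 11, 3, 9, 2, 5], [6, 7, 8, 9, 10, 0, 1, 2, 3, 4, 5, 11, 13, 12], [3, 4, 5, 6, 7, 8, 9, 10, 0, 1, 2, 13, 12, 11], [10, 0, 1, 2, 3, 4, 5, 6, 7, 8, 9, 12, 11, 13]]"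

lemma tc14: "tabcheck 14 A14 B14" by code_simp

lemma all3_tab4: "all3 \<in> tabR 4 A4 B4"
proof -
  have "all3 = mrow 3 3 (A4!3!3) (B4!3!3)" by (auto simp: all3_def mrow_def A4_def B4_def)
  then show ?thesis unfolding tabR_def by (intro image_eqI[where x="(3,3)"]) auto
qed

lemma odd_OA: "odd n \<Longrightarrow> OA 4 n ((\<lambda>(a,b). linrow 4 n a b) ` ({..<n}\<times>{..<n}))"
proof (rule lin_OA)
  assume "odd n" then show "0 < n" by (cases n) auto
next
  fix d :: nat assume o: "odd n" and d: "0 < d" "d + 1 < 4"
  then have "d = 1 \<or> d = 2" by auto
  then show "coprime (int d) (int n)" using o by auto
qed

lemma cop6_OA: "odd t \<Longrightarrow> \<not> 3 dvd t \<Longrightarrow> \<exists>R. OA 5 t R"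
proof (intro exI, rule lin_OA)
  assume "odd t" then show "0 < t" by (cases t) auto
next
  fix d :: nat assume o: "odd t" "\<not> 3 dvd t" and d: "0 < d" "d + 1 < 5"
  have c3: "coprime 3 t" using o(2) by (intro prime_imp_coprime) auto
  from d have "d = 1 \<or> d = 2 \<or> d = 3" by auto
  then show "coprime (int d) (int t)" using o c3 by auto
qed

lemma split_exists:
  fixes n :: nat
  assumes "n mod 4 = 2" "18 \<le> n" "n \<noteq> 30"
  shows "\<exists>t. odd t \<and> \<not> 3 dvd t \<and> 3*t < n \<and> n \<le> 4*t"
proof -
  define q where "q = n div 24"
  have nq: "n = 24*q + n mod 24" by (simp add: q_def)
  have "n mod 24 = 2 \<or> n mod 24 = 6 \<or> n mod 24 = 10 \<or> n mod 24 = 14 \<or> n mod 24 = 18 \<or> n mod 24 = 22"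
    using assms(1) by presburger
  then show ?thesis
  proof (elim disjE)
    assume r: "n mod 24 = 2"
    then have "q \<ge> 1" using assms nq by (cases q) auto
    then show ?thesis using r nq by (intro exI[of _ "6*q+1"]) presburger
  next
    assume r: "n mod 24 = 6"
    then have "q \<ge> 2" using assms nq by (cases q; cases "q - 1") auto
    then show ?thesis using r nq by (intro exI[of _ "6*q+5"]) presburger
  next
    assume r: "n mod 24 = 10"
    then have "q \<ge> 1" using assms nq by (cases q) auto
    then show ?thesis using r nq by (intro exI[of _ "6*q+5"]) presburger
  next
    assume r: "n mod 24 = 14"
    then have "q \<ge> 1" using assms nq by (cases q) auto
    then show ?thesis using r nq by (intro exI[of _ "6*q+5"]) presburger
  next
    assume r: "n mod 24 = 18"
    then show ?thesis using nq by (intro exI[of _ "6*q+5"]) presburger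
  next
    assume r: "n mod 24 = 22"
    then show ?thesis using nq by (intro exI[of _ "6*q+7"]) presburger
  qed
qed

lemma OA_exists: "0 < n \<Longrightarrow> n \<noteq> 2 \<Longrightarrow> n \<noteq> 6 \<Longrightarrow> \<exists>R. OA 4 n R"
proof (induction n rule: less_induct)
  case (less n)
  have T4: "OA 4 4 (tabR 4 A4 B4)" by (rule tab_OA[OF tc4])
  have T8: "\<exists>R. OA 4 8 R" using tab_OA[OF tc8] by blast
  have T10: "\<exists>R. OA 4 10 R" using tab_OA[OF tc10] by blast
  have T14: "\<exists>R. OA 4 14 R" using tab_OA[OF tc14] by blast
  have O3: "\<exists>R. OA 4 3 R" using odd_OA[of 3] by auto
  show ?case
  proof (cases "odd n")
    case True then show ?thesis using odd_OA by blast
  next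
    case False
    then have "n mod 4 = 0 \<or> n mod 4 = 2" by presburger
    then show ?thesis
    proof
      assume m0: "n mod 4 = 0"
      show ?thesis
      proof (cases "n = 4 \<or> n = 8 \<or> n = 24")
        case True
        moreover have "\<exists>R. OA 4 24 R"
        proof -
          obtain R8 where "OA 4 8 R8" using T8 by blast
          moreover obtain R3 where "OA 4 3 R3" using O3 by blast
          ultimately show ?thesis using prod_OA[of 4 8 R8 3 R3] by auto
        qed
        ultimately show ?thesis using T4 T8 by blast
      next
        case False
        define k where "k = n div 4"
        have nk: "n = 4 * k" using m0 unfolding k_def by presburger
        have k: "0 < k" "k < n" "k \<noteq> 2" "k \<noteq> 6" using False less.prems nk by auto
        obtain Rk where "OA 4 k Rk" using less.IH[OF k(2) k(1) k(3) k(4)] by blast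
        then show ?thesis using prod_OA[OF T4, of k Rk] nk by auto
      qed
    next
      assume m2: "n mod 4 = 2"
      show ?thesis
      proof (cases "n = 10 \<or> n = 14 \<or> n = 30")
        case True
        moreover have "\<exists>R. OA 4 30 R"
        proof -
          obtain R10 where "OA 4 10 R10" using T10 by blast
          moreover obtain R3 where "OA 4 3 R3" using O3 by blast
          ultimately show ?thesis using prod_OA[of 4 10 R10 3 R3] by auto
        qed
        ultimately show ?thesis using T10 T14 by blast
      next
        case False
        then have "18 \<le> n" "n \<noteq> 30" using m2 less.prems by presburger+
        then obtain t where t: "odd t" "\<not> 3 dvd t" "3*t < n" "n \<le> 4*t" using split_exists m2 by blast
        define u where "u = n - 3*t"
        have u: "odd u" "u \<le> t" "n = 3*t + u" using t False m2 by (auto simp: u_def) presburger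
        obtain R5 where R5: "OA 5 t R5" using cop6_OA t by blast
        obtain Ru where Ru: "OA 4 u Ru" using odd_OA[OF u(1)] by blast
        obtain R3 where R3: "OA 4 3 R3" using O3 by blast
        show ?thesis using wilson_OA[OF R5 Ru u(2) R3 T4 all3_tab4] u(3) by blast
      qed
    qed
  qed
qed

definition orow :: "(nat \<Rightarrow> nat) set \<Rightarrow> nat \<Rightarrow> nat \<Rightarrow> nat \<Rightarrow> nat" where
  "orow R x y = (THE r. r \<in> R \<and> r 0 = x \<and> r 1 = y)"

lemma orow:
  assumes R: "OA 4 n R" and xy: "x < n" "y < n"
  shows "orow R x y \<in> R" "orow R x y 0 = x" "orow R x y 1 = y"
proof -
  have ex: "\<exists>!r. r \<in> R \<and> r 0 = x \<and> r 1 = y"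
  proof -
    obtain r where "r \<in> R" "r 0 = x" "r 1 = y" using OA_ex[OF R, of 0 1 x y] xy by auto
    moreover have "r' = r" if "r' \<in> R" "r' 0 = x" "r' 1 = y" for r'
      using OA_uniq[OF R, of 0 1 r' r] that calculation by simp
    ultimately show ?thesis by blast
  qed
  have "orow R x y \<in> R \<and> orow R x y 0 = x \<and> orow R x y 1 = y"
    unfolding orow_def by (rule theI'[OF ex])
  then show "orow R x y \<in> R" "orow R x y 0 = x" "orow R x y 1 = y" by auto
qed

lemma orow_val: "OA 4 n R \<Longrightarrow> x < n \<Longrightarrow> y < n \<Longrightarrow> i < 4 \<Longrightarrow> orow R x y i < n"
  using OA_val orow(1) by blast

lemma orow_inj:
  assumes R: "OA 4 n R" and xy: "x < n" "y < n" "x' < n" "y' < n" and ii: "i < 4" "i' < 4" "i \<noteq> i'"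
    and e: "orow R x y i = orow R x' y' i" "orow R x y i' = orow R x' y' i'"
  shows "x = x' \<and> y = y'"
proof -
  have "orow R x y = orow R x' y'"
    using OA_uniq[OF R ii orow(1)[OF R xy(1,2)] orow(1)[OF R xy(3,4)] e] .
  then show ?thesis using orow(2,3)[OF R xy(1,2)] orow(2,3)[OF R xy(3,4)] by metis
qed

definition aont_map :: "(nat \<Rightarrow> nat) set \<Rightarrow> (nat \<Rightarrow> nat) \<Rightarrow> nat \<Rightarrow> nat" where
  "aont_map R w = (let A = (\<lambda>x y. orow R x y 2); B = (\<lambda>x y. orow R x y 3) in
     (\<lambda>i. if i = 0 then A (A (w 0) (w 1)) (w 2) else if i = 1 then A (B (w 0) (w 1)) (w 2)
          else if i = 2 then B (A (w 0) (w 1)) (w 2) else undefined))"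

lemma card_words: "finite X \<Longrightarrow> card (words X s) = card X ^ s"
  by (simp add: words_def card_PiE)

lemma finite_words: "finite X \<Longrightarrow> finite (words X s)"
  by (simp add: words_def finite_PiE)

lemma bij_by_inj_card:
  assumes "inj_on f A" "f ` A \<subseteq> B" "finite B" "card A = card B"
  shows "bij_betw f A B"
proof -
  have "card (f ` A) = card B" using assms(1,4) by (simp add: card_image)
  then have "f ` A = B" using card_subset_eq[OF assms(3) assms(2)] by simp
  then show ?thesis using assms(1) by (simp add: bij_betw_def)
qed

lemma aont23:
  assumes R: "OA 4 n R" and n: "0 < n"
  shows "AONT {..<n} 2 3 n (aont_map R)"
proof -
  let ?X = "{..<n}"
  let ?W = "words ?X 3"
  define A where "A = (\<lambda>x y. orow R x y 2)"
  define B where "B = (\<lambda>x y. orow R x y 3)"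
  have vA: "A x y < n" "B x y < n" if "x < n" "y < n" for x y
    using orow_val[OF R that] by (auto simp: A_def B_def)
  have A1: "y = y'" if "x < n" "y < n" "y' < n" "A x y = A x y'" for x y y'
    using orow_inj[OF R that(1,2) that(1,3), of 0 2] orow(2)[OF R that(1,2)] orow(2)[OF R that(1,3)] that(4)
    by (simp add: A_def)
  have A2: "x = x'" if "x < n" "x' < n" "y < n" "A x y = A x' y" for x x' y
    using orow_inj[OF R that(1,3) that(2,3), of 1 2] orow(3)[OF R that(1,3)] orow(3)[OF R that(2,3)] that(4)
    by (simp add: A_def)
  have B1: "y = y'" if "x < n" "y < n" "y' < n" "B x y = B x y'" for x y y'
    using orow_inj[OF R that(1,2) that(1,3), of 0 3] orow(2)[OF R that(1,2)] orow(2)[OF R that(1,3)] that(4)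
    by (simp add: B_def)
  have B2: "x = x'" if "x < n" "x' < n" "y < n" "B x y = B x' y" for x x' y
    using orow_inj[OF R that(1,3) that(2,3), of 1 3] orow(3)[OF R that(1,3)] orow(3)[OF R that(2,3)] that(4)
    by (simp add: B_def)
  have AB: "x = x' \<and> y = y'" if "x < n" "y < n" "x' < n" "y' < n" "A x y = A x' y'" "B x y = B x' y'" for x y x' y'
    using orow_inj[OF R that(1-4), of 2 3] that(5,6) by (simp add: A_def B_def)
  have phi: "aont_map R w = (\<lambda>i. if i = 0 then A (A (w 0) (w 1)) (w 2) else if i = 1 then A (B (w 0) (w 1)) (w 2)
          else if i = 2 then B (A (w 0) (w 1)) (w 2) else undefined)" for w
    unfolding aont_map_def Let_def A_def B_def by (rule refl)
  have W: "w \<in> ?W \<longleftrightarrow> w 0 < n \<and> w 1 < n \<and> w 2 < n \<and> (\<forall>i. 3 \<le> i \<longrightarrow> w i = undefined)" for w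
  proof
    assume "w \<in> ?W" then show "w 0 < n \<and> w 1 < n \<and> w 2 < n \<and> (\<forall>i. 3 \<le> i \<longrightarrow> w i = undefined)"
      by (auto simp: words_def PiE_def extensional_def)
  next
    assume h: "w 0 < n \<and> w 1 < n \<and> w 2 < n \<and> (\<forall>i. 3 \<le> i \<longrightarrow> w i = undefined)"
    have "w i < n" if "i < 3" for i
    proof -
      have "i = 0 \<or> i = 1 \<or> i = 2" using that by auto
      then show ?thesis using h by auto
    qed
    then show "w \<in> ?W" using h by (auto simp: words_def PiE_def extensional_def)
  qed
  have weq: "w = w'" if "w \<in> ?W" "w' \<in> ?W" "w 0 = w' 0" "w 1 = w' 1" "w 2 = w' 2" for w w'
  proof
    fix i show "w i = w' i"
    proof (cases "i < 3")
      case True then have "i = 0 \<or> i = 1 \<or> i = 2" by auto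
      then show ?thesis using that by auto
    next
      case False then show ?thesis using that W by auto
    qed
  qed
  have into: "aont_map R w \<in> ?W" if "w \<in> ?W" for w
    using that vA unfolding W phi by auto
  have cardW: "card ?W = n ^ 3" by (simp add: card_words)
  have finW: "finite ?W" by (simp add: finite_words)
  have latin: "w k = w' k"
    if "w \<in> ?W" "w' \<in> ?W" "k < 3" "j < 3" "\<forall>i<3. i \<noteq> k \<longrightarrow> w i = w' i" "aont_map R w j = aont_map R w' j" for w w' k j
  proof -
    have r: "w 0 < n" "w 1 < n" "w 2 < n" "w' 0 < n" "w' 1 < n" "w' 2 < n" using that(1,2) W by auto
    have "k = 0 \<or> k = 1 \<or> k = 2" "j = 0 \<or> j = 1 \<or> j = 2" using that(3,4) by auto
    then show ?thesis
    proof (elim disjE)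
      assume "k = 0" "j = 0"
      then have "A (A (w 0) (w 1)) (w 2) = A (A (w' 0) (w 1)) (w 2)" using that(5,6) by (simp add: phi)
      then show ?thesis using A2 A2 vA r \<open>k = 0\<close> by metis
    next
      assume "k = 0" "j = 1"
      then have "A (B (w 0) (w 1)) (w 2) = A (B (w' 0) (w 1)) (w 2)" using that(5,6) by (simp add: phi)
      then show ?thesis using A2 B2 vA r \<open>k = 0\<close> by metis
    next
      assume "k = 0" "j = 2"
      then have "B (A (w 0) (w 1)) (w 2) = B (A (w' 0) (w 1)) (w 2)" using that(5,6) by (simp add: phi)
      then show ?thesis using A2 B2 vA r \<open>k = 0\<close> by metis
    next
      assume "k = 1" "j = 0"
      then have "A (A (w 0) (w 1)) (w 2) = A (A (w 0) (w' 1)) (w 2)" using that(5,6) by (simp add: phi)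
      then show ?thesis using A2 A1 vA r \<open>k = 1\<close> by metis
    next
      assume "k = 1" "j = 1"
      then have "A (B (w 0) (w 1)) (w 2) = A (B (w 0) (w' 1)) (w 2)" using that(5,6) by (simp add: phi)
      then show ?thesis using A2 B1 vA r \<open>k = 1\<close> by metis
    next
      assume "k = 1" "j = 2"
      then have "B (A (w 0) (w 1)) (w 2) = B (A (w 0) (w' 1)) (w 2)" using that(5,6) by (simp add: phi)
      then show ?thesis using B2 A1 vA r \<open>k = 1\<close> by metis
    next
      assume "k = 2" "j = 0"
      then have "A (A (w 0) (w 1)) (w 2) = A (A (w 0) (w 1)) (w' 2)" using that(5,6) by (simp add: phi)
      then show ?thesis using A1 vA r \<open>k = 2\<close> by metis
    next
      assume "k = 2" "j = 1"
      then have "A (B (w 0) (w 1)) (w 2) = A (B (w 0) (w 1)) (w' 2)" using that(5,6) by (simp add: phi)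
      then show ?thesis using A1 vA r \<open>k = 2\<close> by metis
    next
      assume "k = 2" "j = 2"
      then have "B (A (w 0) (w 1)) (w 2) = B (A (w 0) (w 1)) (w' 2)" using that(5,6) by (simp add: phi)
      then show ?thesis using B1 vA r \<open>k = 2\<close> by metis
    qed
  qed
  have injphi: "inj_on (aont_map R) ?W"
  proof (rule inj_onI)
    fix w w' assume ww: "w \<in> ?W" "w' \<in> ?W" and e: "aont_map R w = aont_map R w'"
    have r: "w 0 < n" "w 1 < n" "w 2 < n" "w' 0 < n" "w' 1 < n" "w' 2 < n" using ww W by auto
    have e0: "A (A (w 0) (w 1)) (w 2) = A (A (w' 0) (w' 1)) (w' 2)" using fun_cong[OF e, of 0] by (simp add: phi)
    have e1: "A (B (w 0) (w 1)) (w 2) = A (B (w' 0) (w' 1)) (w' 2)" using fun_cong[OF e, of 1] by (simp add: phi)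
    have e2: "B (A (w 0) (w 1)) (w 2) = B (A (w' 0) (w' 1)) (w' 2)" using fun_cong[OF e, of 2] by (simp add: phi)
    have p: "A (w 0) (w 1) = A (w' 0) (w' 1) \<and> w 2 = w' 2" using AB[OF vA(1) r(3) vA(1) r(6) e0 e2] r by simp
    then have "B (w 0) (w 1) = B (w' 0) (w' 1)" using A2[OF vA(2) vA(2) r(3)] e1 r by simp
    then have "w 0 = w' 0 \<and> w 1 = w' 1" using AB[OF r(1,2,4,5)] p by simp
    then show "w = w'" using weq[OF ww] p by simp
  qed
  have bijphi: "bij_betw (aont_map R) ?W ?W"
    by (rule bij_by_inj_card[OF injphi]) (use into finW in auto)
  have main: "bij_betw (\<lambda>x. (restrict x I, restrict (aont_map R x) J)) ?W (PiE I (\<lambda>_. ?X) \<times> PiE J (\<lambda>_. ?X))"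
    if IJ: "I \<subseteq> {..<3}" "card I = 2" "J \<subseteq> {..<3}" "card J = 3 - 2" for I J
  proof (rule bij_by_inj_card)
    have "card ({..<3} - I) = 1" using IJ by (simp add: card_Diff_subset finite_subset)
    then obtain k where k: "{..<3} - I = {k}" by (auto simp: card_Suc_eq)
    have kI: "k < 3" "k \<notin> I" "\<And>i. i < 3 \<Longrightarrow> i \<noteq> k \<Longrightarrow> i \<in> I" using k by auto
    obtain j where j: "J = {j}" using IJ(4) by (auto simp: card_Suc_eq)
    have jl: "j < 3" using IJ(3) j by auto
    show "inj_on (\<lambda>x. (restrict x I, restrict (aont_map R x) J)) ?W"
    proof (rule inj_onI)
      fix w w' assume ww: "w \<in> ?W" "w' \<in> ?W"
        and e: "(restrict w I, restrict (aont_map R w) J) = (restrict w' I, restrict (aont_map R w') J)"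
      have r1: "restrict w I = restrict w' I" using e by simp
      have eI: "w i = w' i" if "i \<in> I" for i using fun_cong[OF r1, of i] that by simp
      have r2: "restrict (aont_map R w) J = restrict (aont_map R w') J" using e by simp
      have eJ: "aont_map R w j = aont_map R w' j" using fun_cong[OF r2, of j] j by simp
      have oth: "\<forall>i<3. i \<noteq> k \<longrightarrow> w i = w' i" using eI kI by auto
      have "w k = w' k" using latin[OF ww kI(1) jl oth eJ] .
      then have "\<forall>i<3. w i = w' i" using oth by auto
      then show "w = w'" using weq[OF ww] by auto
    qed
    show "(\<lambda>x. (restrict x I, restrict (aont_map R x) J)) ` ?W \<subseteq> PiE I (\<lambda>_. ?X) \<times> PiE J (\<lambda>_. ?X)"
    proof
      fix p assume "p \<in> (\<lambda>x. (restrict x I, restrict (aont_map R x) J)) ` ?W"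
      then obtain w where w: "w \<in> ?W" "p = (restrict w I, restrict (aont_map R w) J)" by auto
      have "w i \<in> ?X" if "i \<in> I" for i using w(1) that IJ(1) by (auto simp: words_def)
      moreover have "aont_map R w i \<in> ?X" if "i \<in> J" for i using into[OF w(1)] that IJ(3) by (auto simp: words_def)
      ultimately show "p \<in> PiE I (\<lambda>_. ?X) \<times> PiE J (\<lambda>_. ?X)" using w(2) by auto
    qed
    show "finite (PiE I (\<lambda>_. ?X) \<times> PiE J (\<lambda>_. ?X))"
      using IJ by (auto intro!: finite_PiE finite_subset[of _ "{..<3}"])
    have fI: "finite I" "finite J" using IJ by (auto intro: finite_subset[of _ "{..<3}"])
    show "card ?W = card (PiE I (\<lambda>_. ?X) \<times> PiE J (\<lambda>_. ?X))"
    proof -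
      have "n ^ 3 = n^2 * (n::nat)" by (simp add: power_numeral_reduce)
      then show ?thesis using fI IJ cardW by (simp add: card_cartesian_product card_PiE)
    qed
  qed
  show ?thesis unfolding AONT_def using bijphi main by auto
qed

lemma AONT_inv:
  assumes a: "AONT X t s v \<phi>"
  shows "AONT X (s - t) s v (inv_into (words X s) \<phi>)"
proof -
  let ?W = "words X s"
  let ?\<psi> = "inv_into ?W \<phi>"
  have fin: "finite X" "card X = v" "t \<le> s" and bij: "bij_betw \<phi> ?W ?W"
    and pr: "\<And>I J. I \<subseteq> {..<s} \<Longrightarrow> card I = t \<Longrightarrow> J \<subseteq> {..<s} \<Longrightarrow> card J = s - t \<Longrightarrow>
        bij_betw (\<lambda>x. (restrict x I, restrict (\<phi> x) J)) ?W (PiE I (\<lambda>_. X) \<times> PiE J (\<lambda>_. X))"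
    using a unfolding AONT_def by blast+
  have bijpsi: "bij_betw ?\<psi> ?W ?W" using bij_betw_inv_into[OF bij] .
  have right: "\<phi> (?\<psi> y) = y" if "y \<in> ?W" for y using bij_betw_inv_into_right[OF bij that] .
  have "bij_betw (\<lambda>y. (restrict y I, restrict (?\<psi> y) J)) ?W (PiE I (\<lambda>_. X) \<times> PiE J (\<lambda>_. X))"
    if IJ: "I \<subseteq> {..<s}" "card I = s - t" "J \<subseteq> {..<s}" "card J = s - (s - t)" for I J
  proof -
    have "card J = t" using IJ(4) fin(3) by simp
    then have g: "bij_betw (\<lambda>x. (restrict x J, restrict (\<phi> x) I)) ?W (PiE J (\<lambda>_. X) \<times> PiE I (\<lambda>_. X))"
      using pr[OF IJ(3) _ IJ(1) IJ(2)] by simp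
    have sw: "bij_betw prod.swap (PiE J (\<lambda>_. X) \<times> PiE I (\<lambda>_. X)) (PiE I (\<lambda>_. X) \<times> PiE J (\<lambda>_. X))"
      by (rule bij_betwI[where g=prod.swap]) auto
    have comp: "bij_betw (prod.swap \<circ> (\<lambda>x. (restrict x J, restrict (\<phi> x) I)) \<circ> ?\<psi>) ?W (PiE I (\<lambda>_. X) \<times> PiE J (\<lambda>_. X))"
      by (rule bij_betw_trans[OF bijpsi bij_betw_trans[OF g sw]])
    show ?thesis
    proof (rule bij_betw_cong[THEN iffD1, OF _ comp])
      fix y assume "y \<in> ?W"
      then show "(prod.swap \<circ> (\<lambda>x. (restrict x J, restrict (\<phi> x) I)) \<circ> ?\<psi>) y = (restrict y I, restrict (?\<psi> y) J)"
        using right by simp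
    qed
  qed
  then show ?thesis unfolding AONT_def using fin bijpsi by auto
qed

theorem corollary3p8:
  fixes n :: nat
  assumes "n > 0" and "n \<noteq> 2" and "n \<noteq> 6"
  shows "(\<exists>(X :: nat set) \<phi>. AONT X 2 3 n \<phi>) \<and> (\<exists>(X :: nat set) \<phi>. AONT X 1 3 n \<phi>)"
proof -
  obtain R where R: "OA 4 n R" using OA_exists assms by blast
  have a: "AONT {..<n} 2 3 n (aont_map R)" using aont23[OF R assms(1)] .
  have b: "AONT {..<n} (3 - 2) 3 n (inv_into (words {..<n} 3) (aont_map R))" using AONT_inv[OF a] .
  then have b': "AONT {..<n} 1 3 n (inv_into (words {..<n} 3) (aont_map R))" by simp
  show ?thesis using a b' by blast
qed

end
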